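(* Let $X$ be a finite rack acting strongly on a set $M$. Let $x\in X$ be of order $k$ in $X$. Then every element $m\cdot(x_i)_{i=1}^r$ (with $m\in M$, $x_1,\ldots,x_r\in X$), where $x$ appears $k$ times in the sequence $x_1,\ldots,x_r$, can be written as $m\cdot(y_j)_{j=1}^{r-k}$ for some $y_1,\ldots,y_{r-k}\in X$.
   Context: A rack is a set $X$ with a binary operation $\rhd$ such that each $x\mapsto x\rhd y$ is bijective and $(x\rhd y)\rhd z=(x\rhd z)\rhd(y\rhd z)$. A stabilizing family of $X$ is a finite family $(u_1,\ldots,u_s)$ with $(\cdots(z\rhd u_1)\cdots)\rhd u_s=z$ for all $z\in X$. The order of $x\in X$ is the least $k\ge1$ such that the constant family $(x,\ldots,x)$ of length $k$ is a stabilizing family. A rack action of $X$ on $M$ is a map $(m,x)\mapsto m\cdot x$ such that each $m\mapsto m\cdot x$ is a bijection, $(m\cdot x)\cdot y=(m\cdot y)\cdot(x\rhd y)$, and for every stabilizing family $(u_1,\ldots,u_s)$ and every cyclic shift $\sigma$ of $\{1,\ldots,s\}$, $m\cdot(u_i)_i=m\cdot(u_{\sigma(i)})_i$, where $m\cdot(x_i)_{i=1}^s:=(\cdots(m\cdot x_1)\cdots)\cdot x_s$. The action is strong if every stabilizing family $(u_1,\ldots,u_s)$ of $X$ satisfies $m\cdot(u_i)_i=m$ for all $m\in M$. *)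

theory Defs
  imports Main
begin

text \<open>A rack on a carrier set X with operation rt (rt x y stands for x \<rhd> y).\<close>
definition rack :: "'x set \<Rightarrow> ('x \<Rightarrow> 'x \<Rightarrow> 'x) \<Rightarrow> bool" where
  "rack X rt \<longleftrightarrow>
     (\<forall>x\<in>X. \<forall>y\<in>X. rt x y \<in> X) \<and>
     (\<forall>y\<in>X. bij_betw (\<lambda>x. rt x y) X X) \<and>
     (\<forall>x\<in>X. \<forall>y\<in>X. \<forall>z\<in>X. rt (rt x y) z = rt (rt x z) (rt y z))"

definition rack_fam :: "('x \<Rightarrow> 'x \<Rightarrow> 'x) \<Rightarrow> 'x \<Rightarrow> 'x list \<Rightarrow> 'x" where
  "rack_fam rt z us = foldl rt z us"

definition stabilizing :: "'x set \<Rightarrow> ('x \<Rightarrow> 'x \<Rightarrow> 'x) \<Rightarrow> 'x list \<Rightarrow> bool" where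
  "stabilizing X rt us \<longleftrightarrow> set us \<subseteq> X \<and> (\<forall>z\<in>X. rack_fam rt z us = z)"

definition rack_order :: "'x set \<Rightarrow> ('x \<Rightarrow> 'x \<Rightarrow> 'x) \<Rightarrow> 'x \<Rightarrow> nat" where
  "rack_order X rt x = (LEAST k. k \<ge> 1 \<and> stabilizing X rt (replicate k x))"

text \<open>m \<cdot> (x_i)_i := (...(m \<cdot> x1)...) \<cdot> xs.\<close>
definition act_fam :: "('m \<Rightarrow> 'x \<Rightarrow> 'm) \<Rightarrow> 'm \<Rightarrow> 'x list \<Rightarrow> 'm" where
  "act_fam act m xs = foldl act m xs"

definition rack_action ::
  "'x set \<Rightarrow> ('x \<Rightarrow> 'x \<Rightarrow> 'x) \<Rightarrow> 'm set \<Rightarrow> ('m \<Rightarrow> 'x \<Rightarrow> 'm) \<Rightarrow> bool" where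
  "rack_action X rt M act \<longleftrightarrow>
     (\<forall>m\<in>M. \<forall>x\<in>X. act m x \<in> M) \<and>
     (\<forall>x\<in>X. bij_betw (\<lambda>m. act m x) M M) \<and>
     (\<forall>m\<in>M. \<forall>x\<in>X. \<forall>y\<in>X. act (act m x) y = act (act m y) (rt x y)) \<and>
     (\<forall>us. stabilizing X rt us \<longrightarrow>
        (\<forall>n. \<forall>m\<in>M. act_fam act m us = act_fam act m (rotate n us)))"

definition strong_rack_action ::
  "'x set \<Rightarrow> ('x \<Rightarrow> 'x \<Rightarrow> 'x) \<Rightarrow> 'm set \<Rightarrow> ('m \<Rightarrow> 'x \<Rightarrow> 'm) \<Rightarrow> bool" where
  "strong_rack_action X rt M act \<longleftrightarrow>
     rack_action X rt M act \<and>
     (\<forall>us. stabilizing X rt us \<longrightarrow> (\<forall>m\<in>M. act_fam act m us = m))"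

end

theory Submission
  imports Defs "HOL-Library.FuncSet"
begin

lemma fam_rep: "rack_fam rt z (replicate n x) = ((\<lambda>z. rt z x)^^n) z"
  unfolding rack_fam_def
  by (induction n arbitrary: z) (auto simp: funpow_Suc_right simp del: funpow.simps)

lemma funpow_in: "\<forall>z\<in>X. f z \<in> X \<Longrightarrow> z \<in> X \<Longrightarrow> (f^^n) z \<in> X"
  by (induction n) auto

lemma inj_funpow: "inj_on f X \<Longrightarrow> \<forall>z\<in>X. f z \<in> X \<Longrightarrow> inj_on (f^^n) X"
proof (induction n)
  case 0 then show ?case by simp
next
  case (Suc n)
  have "inj_on (f^^n) (f ` X)"
    by (rule inj_on_subset[OF Suc.IH[OF Suc.prems]]) (use Suc.prems in auto)
  then show ?case unfolding funpow_Suc_right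
    by (rule comp_inj_on[OF Suc.prems(1)])
qed

lemma order_exists:
  assumes "finite X" "rack X rt" "x \<in> X"
  shows "\<exists>k\<ge>1. stabilizing X rt (replicate k x)"
proof -
  define f where "f = (\<lambda>z. rt z x)"
  have fX: "\<forall>z\<in>X. f z \<in> X" using assms unfolding rack_def f_def by auto
  have injf: "inj_on f X" using assms unfolding rack_def f_def bij_betw_def by auto
  define g where "g n = restrict (f^^n) X" for n
  have "range g \<subseteq> X \<rightarrow>\<^sub>E X" unfolding g_def using fX funpow_in[OF fX] by auto
  moreover have "finite (X \<rightarrow>\<^sub>E X)" using assms(1) by (simp add: finite_PiE)
  ultimately have "finite (range g)" by (meson finite_subset)
  hence "\<not> inj g" using finite_imageD by fastforce
  then obtain i j where ij: "i \<noteq> j" "g i = g j" unfolding inj_def by blast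
  hence "\<exists>i j. i < j \<and> g i = g j" by (metis linorder_neqE_nat)
  then obtain i j where ij: "i < j" "g i = g j" by blast
  have eq: "(f^^i) ((f^^(j-i)) z) = (f^^i) z" if "z \<in> X" for z
  proof -
    have "(f^^i) ((f^^(j-i)) z) = (f^^j) z"
      using ij(1) by (metis funpow_add le_add_diff_inverse less_imp_le o_apply)
    also have "\<dots> = (f^^i) z" using ij(2) that unfolding g_def by (metis restrict_apply')
    finally show ?thesis .
  qed
  have "(f^^(j-i)) z = z" if "z \<in> X" for z
    using inj_onD[OF inj_funpow[OF injf fX, of i] eq[OF that]] funpow_in[OF fX that] that by blast
  hence "stabilizing X rt (replicate (j-i) x)"
    unfolding stabilizing_def fam_rep f_def[symmetric] using assms(3) by auto
  thus ?thesis using ij(1) by (intro exI[of _ "j-i"]) auto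
qed

lemma act_in: "rack_action X rt M act \<Longrightarrow> m \<in> M \<Longrightarrow> set xs \<subseteq> X \<Longrightarrow> act_fam act m xs \<in> M"
  unfolding act_fam_def rack_action_def
  by (induction xs arbitrary: m) auto

lemma move_front:
  assumes "rack_action X rt M act" "x \<in> X"
  shows "m \<in> M \<Longrightarrow> set ys \<subseteq> X \<Longrightarrow>
     act_fam act m (ys @ [x]) = act_fam act m (x # map (\<lambda>y. rt y x) ys)"
proof (induction ys arbitrary: m)
  case Nil then show ?case by simp
next
  case (Cons b ys)
  have bm: "act m b \<in> M" using assms Cons.prems unfolding rack_action_def by auto
  have sw: "act (act m b) x = act (act m x) (rt b x)"
    using assms Cons.prems unfolding rack_action_def by auto
  have "act_fam act m ((b # ys) @ [x]) = act_fam act (act m b) (ys @ [x])"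
    unfolding act_fam_def by simp
  also have "\<dots> = act_fam act (act m b) (x # map (\<lambda>y. rt y x) ys)"
    using Cons bm by simp
  also have "\<dots> = act_fam act m (x # map (\<lambda>y. rt y x) (b # ys))"
    unfolding act_fam_def using sw by simp
  finally show ?case .
qed

lemma collect:
  assumes "rack X rt" "rack_action X rt M act" "x \<in> X"
  shows "m \<in> M \<Longrightarrow> set xs \<subseteq> X \<Longrightarrow> \<exists>ys. set ys \<subseteq> X \<and> length ys = length xs - count_list xs x
     \<and> act_fam act m xs = act_fam act m (replicate (count_list xs x) x @ ys)"
proof (induction xs rule: rev_induct)
  case Nil then show ?case by simp
next
  case (snoc a zs)
  then obtain ys where ys: "set ys \<subseteq> X" "length ys = length zs - count_list zs x"
    "act_fam act m zs = act_fam act m (replicate (count_list zs x) x @ ys)" by auto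
  have cle: "count_list zs x \<le> length zs"
    by (induction zs) auto
  show ?case
  proof (cases "a = x")
    case False
    thus ?thesis using ys snoc.prems cle
      by (intro exI[of _ "ys @ [a]"]) (auto simp: act_fam_def)
  next
    case True
    let ?c = "count_list zs x"
    let ?m' = "act_fam act m (replicate ?c x)"
    have m': "?m' \<in> M" using act_in[OF assms(2) snoc.prems(1), of "replicate ?c x"] assms(3)
      by (auto simp: set_replicate_conv_if)
    have "act_fam act m (zs @ [a]) = act_fam act ?m' (ys @ [x])"
      using ys True unfolding act_fam_def by simp
    also have "\<dots> = act_fam act ?m' (x # map (\<lambda>y. rt y x) ys)"
      using move_front[OF assms(2,3) m' ys(1)] .
    also have "\<dots> = act_fam act m (replicate (Suc ?c) x @ map (\<lambda>y. rt y x) ys)"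
      unfolding act_fam_def by (simp add: replicate_append_same[symmetric])
    finally show ?thesis using True ys cle assms(1,3)
      by (intro exI[of _ "map (\<lambda>y. rt y x) ys"]) (auto simp: rack_def)
  qed
qed

theorem mainTheorem19:
  fixes X :: "'x set" and rt :: "'x \<Rightarrow> 'x \<Rightarrow> 'x"
    and M :: "'m set" and act :: "'m \<Rightarrow> 'x \<Rightarrow> 'm"
  assumes "finite X" and "rack X rt"
    and "strong_rack_action X rt M act"
    and "x \<in> X" and "rack_order X rt x = k"
    and "m \<in> M" and "set xs \<subseteq> X" and "count_list xs x = k"
  shows "\<exists>ys. set ys \<subseteq> X \<and> length ys = length xs - k \<and>
             act_fam act m xs = act_fam act m ys"
proof -
  have ra: "rack_action X rt M act" using assms(3) unfolding strong_rack_action_def by simp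
  have stab: "stabilizing X rt (replicate k x)"
    using order_exists[OF assms(1,2,4)] assms(5) unfolding rack_order_def
    by (metis (mono_tags, lifting) LeastI)
  obtain ys where ys: "set ys \<subseteq> X" "length ys = length xs - k"
    "act_fam act m xs = act_fam act m (replicate k x @ ys)"
    using collect[OF assms(2) ra assms(4,6,7)] assms(8) by auto
  have "act_fam act m (replicate k x) = m"
    using assms(3,6) stab unfolding strong_rack_action_def by blast
  hence "act_fam act m (replicate k x @ ys) = act_fam act m ys"
    unfolding act_fam_def by simp
  thus ?thesis using ys by auto
qed

end
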